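(* Let $F$ be a commutative field, $1\le h\le n-1$, and let $K$ be a linear complex of $h$-subspaces in $\mathrm{PG}(n,F)$. Then the set of all singular $(h-1)$-subspaces of $K$ equals $(\mathcal G_{n,h-1}\cap W)^{\wp_{n,h-1}^{-1}}$ for some subspace $W$ of $\mathrm{PG}\big(\binom{n+1}{h}-1,F\big)$ with $\binom{n+1}{h}-(n+2)\le\dim W\le\binom{n+1}{h}-(h+2)$.
   Context: A $d$-subspace is a projective subspace of dimension $d$. For $0\le k\le n-1$, $\wp_{n,k}$ denotes the Plücker embedding sending the $k$-subspace spanned by independent $v_0,\dots,v_k\in F^{n+1}$ to $F(v_0\wedge\cdots\wedge v_k)$ in $\mathrm{PG}\big(\binom{n+1}{k+1}-1,F\big)=\mathbb P(\bigwedge^{k+1}F^{n+1})$; its image is the Grassmann variety $\mathcal G_{n,k}$. A linear complex of $h$-subspaces is the set of $h$-subspaces whose image under $\wp_{n,h}$ lies in a fixed hyperplane of $\mathrm{PG}\big(\binom{n+1}{h+1}-1,F\big)$. An $(h-1)$-subspace $U$ is singular for $K$ if every $h$-subspace containing $U$ belongs to $K$. *)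

theory Defs
  imports Complex_Main "HOL-Library.Function_Algebras" "HOL-Combinatorics.Permutations"
begin

text \<open>Vectors of F^{n+1} are functions nat => F vanishing outside {0..n};
 Pluecker coordinates are functions (nat set) => F vanishing outside the
 (k+1)-subsets of {0..n}.\<close>

definition fscale :: "'a::field \<Rightarrow> ('b \<Rightarrow> 'a) \<Rightarrow> ('b \<Rightarrow> 'a)" where
  "fscale c f = (\<lambda>i. c * f i)"

interpretation fsp: vector_space "fscale :: 'a::field \<Rightarrow> ('b \<Rightarrow> 'a) \<Rightarrow> ('b \<Rightarrow> 'a)"
  by unfold_locales (auto simp: fscale_def algebra_simps)

definition ambient :: "nat \<Rightarrow> (nat \<Rightarrow> 'a::field) set" where
  "ambient n = {v. \<forall>i>n. v i = 0}"

text \<open>A projective d-subspace of PG(n,F), represented by the corresponding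
 (d+1)-dimensional linear subspace of F^{n+1}.\<close>
definition proj_subspace :: "nat \<Rightarrow> nat \<Rightarrow> (nat \<Rightarrow> 'a::field) set \<Rightarrow> bool" where
  "proj_subspace n d U \<longleftrightarrow> fsp.subspace U \<and> U \<subseteq> ambient n \<and> fsp.dim U = d + 1"

text \<open>The vector space underlying PG(binom(n+1,k+1)-1,F) = P(wedge^{k+1} F^{n+1}),
 with coordinates indexed by the (k+1)-subsets of {0..n}.\<close>
definition pl_space :: "nat \<Rightarrow> nat \<Rightarrow> (nat set \<Rightarrow> 'a::field) set" where
  "pl_space n k = {x. \<forall>S. x S \<noteq> 0 \<longrightarrow> S \<subseteq> {..n} \<and> card S = k + 1}"

text \<open>Coordinates of v_0 wedge ... wedge v_k: the coordinate at S = {s_0 < ... < s_k}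
 is the determinant of the minor with columns s_0,...,s_k (Leibniz formula).\<close>
definition wedge :: "nat \<Rightarrow> (nat \<Rightarrow> 'a::field) list \<Rightarrow> nat set \<Rightarrow> 'a" where
  "wedge n vs S = (if S \<subseteq> {..n} \<and> card S = length vs then
      (\<Sum>p\<in>{p. p permutes {..<length vs}}. of_int (sign p) *
         (\<Prod>i<length vs. (vs ! i) (sorted_list_of_set S ! p i)))
    else 0)"

definition pluecker :: "nat \<Rightarrow> nat \<Rightarrow> (nat \<Rightarrow> 'a::field) set \<Rightarrow> (nat set \<Rightarrow> 'a) set" where
  "pluecker n k U = fsp.span {wedge n (SOME vs. length vs = k + 1 \<and> distinct vs \<and>
       fsp.independent (set vs) \<and> fsp.span (set vs) = U)}"

definition pl_hyperplane :: "nat \<Rightarrow> nat \<Rightarrow> (nat set \<Rightarrow> 'a::field) set \<Rightarrow> bool" where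
  "pl_hyperplane n k H \<longleftrightarrow> fsp.subspace H \<and> H \<subseteq> pl_space n k \<and>
     fsp.dim H = (n + 1 choose (k + 1)) - 1"

definition linear_complex :: "nat \<Rightarrow> nat \<Rightarrow> (nat \<Rightarrow> 'a::field) set set \<Rightarrow> bool" where
  "linear_complex n h K \<longleftrightarrow> (\<exists>H. pl_hyperplane n h H \<and>
     K = {U. proj_subspace n h U \<and> pluecker n h U \<subseteq> H})"

definition singular :: "nat \<Rightarrow> nat \<Rightarrow> (nat \<Rightarrow> 'a::field) set set \<Rightarrow> (nat \<Rightarrow> 'a) set \<Rightarrow> bool" where
  "singular n h K U \<longleftrightarrow> proj_subspace n (h - 1) U \<and>
     (\<forall>V. proj_subspace n h V \<and> U \<subseteq> V \<longrightarrow> V \<in> K)"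

end

theory Submission
  imports Defs "Jordan_Normal_Form.Determinant"
begin

lemma sum_fun_apply: "(\<Sum>i\<in>A. f i) x = (\<Sum>i\<in>A. f i x)"
  by (induction A rule: infinite_finite_induct) auto

lemma fscale_apply[simp]: "fscale c f x = c * f x"
  by (simp add: fscale_def)

definition fd :: "('b \<Rightarrow> 'a::field) set \<Rightarrow> bool" where
  "fd V \<longleftrightarrow> (\<exists>F. finite F \<and> V \<subseteq> fsp.span F)"

lemma fd_subset: "fd W \<Longrightarrow> V \<subseteq> fsp.span W \<Longrightarrow> fd V"
  unfolding fd_def by (meson fsp.span_minimal fsp.subspace_span order_trans)

lemma dim_mono_fd:
  assumes "fd W" "V \<subseteq> fsp.span W"
  shows "fsp.dim V \<le> fsp.dim W"
proof -
  obtain F where F: "finite F" "W \<subseteq> fsp.span F" using assms(1) fd_def by blast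
  obtain B where B: "B \<subseteq> W" "fsp.independent B" "W \<subseteq> fsp.span B"
    using fsp.maximal_independent_subset by blast
  have fB: "finite B" using fsp.independent_span_bound[OF F(1) B(2)] B(1) F(2) by blast
  have "fsp.dim W = card B" using fsp.basis_card_eq_dim[OF B(1) B(3) B(2)] by simp
  moreover have "V \<subseteq> fsp.span B"
    using assms(2) B(3) by (meson fsp.span_minimal fsp.subspace_span order_trans)
  ultimately show ?thesis using fsp.dim_le_card fB by metis
qed

lemma dim_insert_fd:
  assumes "fd S" "x \<notin> fsp.span S"
  shows "fsp.dim (insert x S) = fsp.dim S + 1"
proof -
  obtain F where F: "finite F" "S \<subseteq> fsp.span F" using assms(1) fd_def by blast
  obtain B where B: "B \<subseteq> fsp.span S" "fsp.independent B" "fsp.span S \<subseteq> fsp.span B" "card B = fsp.dim (fsp.span S)"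
    using fsp.basis_exists [of "fsp.span S"] by blast
  have "fsp.span S \<subseteq> fsp.span F" using F(2) by (meson fsp.span_minimal fsp.subspace_span)
  then have fB: "finite B" using fsp.independent_span_bound[OF F(1) B(2)] B(1) by blast
  have "fsp.dim (fsp.span (insert x S)) = Suc (fsp.dim S)"
  proof (rule fsp.dim_unique)
    show "insert x B \<subseteq> fsp.span (insert x S)"
      by (meson B(1) insertI1 insert_subset order_trans fsp.span_base fsp.span_mono subset_insertI)
    show "fsp.span (insert x S) \<subseteq> fsp.span (insert x B)"
      by (metis \<open>B \<subseteq> fsp.span S\<close> \<open>fsp.span S \<subseteq> fsp.span B\<close> fsp.span_breakdown_eq fsp.span_subspace subsetI fsp.subspace_span)
    show "fsp.independent (insert x B)"
      by (metis B(1-3) fsp.independent_insert fsp.span_subspace fsp.subspace_span assms(2))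
    show "card (insert x B) = Suc (fsp.dim S)"
      using B assms(2) fB by (metis card_insert_disjoint fsp.dim_span fsp.span_base in_mono)
  qed
  then show ?thesis
    by (metis Suc_eq_plus1 fsp.dim_span)
qed


lemma lin_diff:
  assumes add: "\<And>x y. l (x + y) = l x + l y" and sc: "\<And>c x. l (fscale c x) = c * l x"
  shows "l (x - y) = l x - (l y :: 'a::field)"
proof -
  have "x - y = x + fscale (-1) y" by (rule ext) simp
  then have "l (x - y) = l x + l (fscale (-1) y)" using add by (simp only:)
  also have "\<dots> = l x + (-1) * l y" using sc by (simp only:)
  finally show ?thesis by simp
qed

lemma lin_zero:
  assumes sc: "\<And>c x. l (fscale c x) = c * l x"
  shows "l 0 = (0::'a::field)"
proof -
  have "(0::'b\<Rightarrow>'a) = fscale 0 0" by (rule ext) simp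
  then have "l 0 = 0 * l 0" using sc by metis
  then show ?thesis by simp
qed

lemma section_dim:
  fixes l :: "('b \<Rightarrow> 'a::field) \<Rightarrow> 'a"
  assumes S: "fsp.subspace S" "fd S"
    and add: "\<And>x y. l (x + y) = l x + l y" and sc: "\<And>c x. l (fscale c x) = c * l x"
  shows "fsp.subspace {x\<in>S. l x = 0}"
    and "fsp.dim S \<le> fsp.dim {x\<in>S. l x = 0} + 1"
    and "s0 \<in> S \<Longrightarrow> l s0 \<noteq> 0 \<Longrightarrow> fsp.dim {x\<in>S. l x = 0} + 1 \<le> fsp.dim S"
proof -
  let ?S0 = "{x\<in>S. l x = 0}"
  show sub: "fsp.subspace ?S0"
    using S(1) lin_zero[of l, OF sc] unfolding fsp.subspace_def by (auto simp: add sc)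
  have fd0: "fd ?S0" by (rule fd_subset[OF S(2)]) (auto intro: fsp.span_base)
  have spS0: "fsp.span ?S0 = ?S0" using sub by simp
  have notin: "s0 \<notin> fsp.span ?S0" if "l s0 \<noteq> 0" for s0
    using that unfolding spS0 by simp
  show "fsp.dim S \<le> fsp.dim ?S0 + 1"
  proof (cases "\<forall>x\<in>S. l x = 0")
    case True then have "?S0 = S" by auto
    then show ?thesis by simp
  next
    case False
    then obtain s0 where s0: "s0 \<in> S" "l s0 \<noteq> 0" by auto
    have "S \<subseteq> fsp.span (insert s0 ?S0)"
    proof
      fix x assume x: "x \<in> S"
      let ?k = "l x / l s0"
      have "x - fscale ?k s0 \<in> ?S0"
      proof -
        have "x - fscale ?k s0 \<in> S"
          using x s0 S(1) by (simp add: fsp.subspace_diff fsp.subspace_scale)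
        moreover have "l (x - fscale ?k s0) = 0"
          using lin_diff[of l, OF add sc] sc s0(2) by simp
        ultimately show ?thesis by simp
      qed
      then show "x \<in> fsp.span (insert s0 ?S0)"
        unfolding fsp.span_breakdown_eq by (intro exI[of _ ?k] fsp.span_base)
    qed
    moreover have "fd (insert s0 ?S0)" by (rule fd_subset[OF S(2)]) (use s0 in \<open>auto intro: fsp.span_base\<close>)
    ultimately have "fsp.dim S \<le> fsp.dim (insert s0 ?S0)" by (rule dim_mono_fd[rotated])
    also have "\<dots> = fsp.dim ?S0 + 1" using dim_insert_fd[OF fd0 notin[OF s0(2)]] .
    finally show ?thesis .
  qed
  assume s0: "s0 \<in> S" "l s0 \<noteq> 0"
  have "fsp.dim ?S0 + 1 = fsp.dim (insert s0 ?S0)" using dim_insert_fd[OF fd0 notin[OF s0(2)]] by simp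
  also have "\<dots> \<le> fsp.dim S" by (rule dim_mono_fd[OF S(2)]) (use s0 in \<open>auto intro: fsp.span_base\<close>)
  finally show "fsp.dim ?S0 + 1 \<le> fsp.dim S" .
qed



definition Ts :: "nat \<Rightarrow> nat \<Rightarrow> nat set set" where
  "Ts n k = {T. T \<subseteq> {..n} \<and> card T = k + 1}"

definition delta :: "nat set \<Rightarrow> nat set \<Rightarrow> 'a::field" where
  "delta S = (\<lambda>T. if T = S then 1 else 0)"

lemma finite_Ts[simp]: "finite (Ts n k)"
  unfolding Ts_def by (rule finite_subset[of _ "Pow {..n}"]) auto

lemma card_Ts: "card (Ts n k) = (n + 1 choose (k + 1))"
  unfolding Ts_def using n_subsets[of "{..n}" "k+1"] by simp

lemma inj_delta: "inj_on (delta :: nat set \<Rightarrow> nat set \<Rightarrow> 'a::field) A"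
proof (rule inj_onI)
  fix S T assume "(delta S :: nat set \<Rightarrow> 'a) = delta T"
  then have "(delta S :: nat set \<Rightarrow> 'a) S = delta T S" by simp
  then show "S = T" unfolding delta_def by (cases "S = T") auto
qed

lemma pl_space_mem: "x \<in> pl_space n k \<longleftrightarrow> (\<forall>S. S \<notin> Ts n k \<longrightarrow> x S = 0)"
  unfolding pl_space_def Ts_def by blast

lemma pl_space_subspace: "fsp.subspace (pl_space n k :: (nat set \<Rightarrow> 'a::field) set)"
  unfolding fsp.subspace_def by (simp add: pl_space_mem)

lemma pl_space_expand:
  assumes "y \<in> pl_space n k"
  shows "y = (\<Sum>T\<in>Ts n k. fscale (y T) (delta T))"
proof (rule ext)
  fix S
  have yS: "y S \<noteq> 0 \<Longrightarrow> S \<in> Ts n k" using assms unfolding pl_space_def Ts_def by simp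
  have "(\<Sum>T\<in>Ts n k. fscale (y T) (delta T)) S = (\<Sum>T\<in>Ts n k. y T * delta T S)"
    by (simp add: sum_fun_apply)
  also have "\<dots> = (if S \<in> Ts n k then y S else 0)"
    by (simp add: delta_def if_distrib cong: if_cong)
  also have "\<dots> = y S" using yS by (cases "S \<in> Ts n k") auto
  finally show "y S = (\<Sum>T\<in>Ts n k. fscale (y T) (delta T)) S" by simp
qed

lemma delta_in_pl: "T \<in> Ts n k \<Longrightarrow> delta T \<in> pl_space n k"
  unfolding pl_space_def Ts_def delta_def by auto

lemma pl_space_span: "(pl_space n k :: (nat set \<Rightarrow> 'a::field) set) = fsp.span (delta ` Ts n k)"
proof (rule equalityI)
  show "(pl_space n k :: (nat set \<Rightarrow> 'a) set) \<subseteq> fsp.span (delta ` Ts n k)"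
  proof
    fix y :: "nat set \<Rightarrow> 'a" assume y: "y \<in> pl_space n k"
    have "(\<Sum>T\<in>Ts n k. fscale (y T) (delta T)) \<in> fsp.span (delta ` Ts n k)"
      by (intro fsp.span_sum fsp.span_scale fsp.span_base) auto
    then show "y \<in> fsp.span (delta ` Ts n k)" using pl_space_expand[OF y] by simp
  qed
  show "fsp.span (delta ` Ts n k) \<subseteq> (pl_space n k :: (nat set \<Rightarrow> 'a) set)"
    by (rule fsp.span_minimal) (auto simp: delta_in_pl pl_space_subspace)
qed

lemma delta_indep: "fsp.independent ((delta :: nat set \<Rightarrow> nat set \<Rightarrow> 'a::field) ` Ts n k)"
proof (rule notI)
  let ?D = "(delta :: nat set \<Rightarrow> nat set \<Rightarrow> 'a) ` Ts n k"
  assume "fsp.dependent ?D"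
  then obtain u where u: "\<exists>v\<in>?D. u v \<noteq> 0" "(\<Sum>v\<in>?D. fscale (u v) v) = 0"
    using fsp.dependent_finite[of ?D] by auto
  then obtain T0 where T0: "T0 \<in> Ts n k" "u (delta T0) \<noteq> 0" by auto
  have "0 = (\<Sum>v\<in>?D. fscale (u v) v) T0" using u(2) by simp
  also have "\<dots> = (\<Sum>v\<in>?D. u v * v T0)" by (simp add: sum_fun_apply)
  also have "\<dots> = u (delta T0) * delta T0 T0 + (\<Sum>v\<in>?D - {delta T0}. u v * v T0)"
    using T0(1) by (subst sum.remove[of ?D "delta T0"]) auto
  also have "(\<Sum>v\<in>?D - {delta T0}. u v * v T0) = 0"
  proof (rule sum.neutral, rule ballI)
    fix v assume v: "v \<in> ?D - {delta T0}"
    then obtain T where T: "T \<in> Ts n k" "v = delta T" by auto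
    then have "T \<noteq> T0" using v by auto
    then show "u v * v T0 = 0" using T by (simp add: delta_def)
  qed
  finally show False using T0(2) by (simp add: delta_def)
qed

lemma dim_pl_space: "fsp.dim (pl_space n k :: (nat set \<Rightarrow> 'a::field) set) = (n + 1 choose (k + 1))"
proof -
  have "fsp.dim (pl_space n k :: (nat set \<Rightarrow> 'a) set) = card ((delta :: nat set \<Rightarrow> nat set \<Rightarrow> 'a) ` Ts n k)"
    unfolding pl_space_span by (rule fsp.dim_span_eq_card_independent[OF delta_indep])
  also have "\<dots> = card (Ts n k)" by (rule card_image[OF inj_delta])
  finally show ?thesis by (simp add: card_Ts)
qed

lemma fd_pl_space: "fd (pl_space n k)"
  unfolding fd_def pl_space_span by (intro exI[of _ "delta ` Ts n k"]) simp



definition Mw :: "(nat \<Rightarrow> 'a::field) list \<Rightarrow> nat set \<Rightarrow> 'a mat" where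
  "Mw vs S = mat (length vs) (length vs) (\<lambda>(i,j). (vs ! i) (sorted_list_of_set S ! j))"

lemma wedge_det:
  assumes "S \<subseteq> {..n}" "card S = length vs"
  shows "wedge n vs S = det (Mw vs S)"
proof -
  let ?m = "length vs"
  have "det (Mw vs S) = (\<Sum>p\<in>{p. p permutes {0..<?m}}. signof p * (\<Prod>i = 0..<?m. Mw vs S $$ (i, p i)))"
    unfolding det_def by (simp add: Mw_def)
  also have "\<dots> = (\<Sum>p\<in>{p. p permutes {..<?m}}. of_int (sign p) * (\<Prod>i<?m. (vs ! i) (sorted_list_of_set S ! p i)))"
  proof (rule sum.cong)
    show "{p. p permutes {0..<?m}} = {p. p permutes {..<?m}}" by (simp add: lessThan_atLeast0)
  next
    fix p assume "p \<in> {p. p permutes {..<?m}}"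
    then have p: "p permutes {..<?m}" by simp
    have "(\<Prod>i = 0..<?m. Mw vs S $$ (i, p i)) = (\<Prod>i<?m. (vs ! i) (sorted_list_of_set S ! p i))"
      unfolding lessThan_atLeast0[symmetric]
    proof (rule prod.cong[OF refl])
      fix i assume i: "i \<in> {..<?m}"
      then have "p i < ?m" using permutes_in_image[OF p] by simp
      then show "Mw vs S $$ (i, p i) = (vs ! i) (sorted_list_of_set S ! p i)"
        using i by (simp add: Mw_def)
    qed
    then show "signof p * (\<Prod>i = 0..<?m. Mw vs S $$ (i, p i)) = of_int (sign p) * (\<Prod>i<?m. (vs ! i) (sorted_list_of_set S ! p i))"
      by simp
  qed
  finally show ?thesis using assms unfolding wedge_def by simp
qed

lemma wedge_lincomb:
  assumes lw: "length ws = m" and lz: "length zs = m"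
    and ws: "\<And>i. i < m \<Longrightarrow> ws ! i = (\<Sum>k<m. fscale (a i k) (zs ! k))"
  shows "wedge n ws S = det (mat m m (\<lambda>(i,k). a i k)) * wedge n zs S"
proof (cases "S \<subseteq> {..n} \<and> card S = m")
  case False
  then show ?thesis unfolding wedge_def using lw lz by auto
next
  case True
  let ?A = "mat m m (\<lambda>(i,k). a i k)"
  have "Mw ws S = ?A * Mw zs S"
  proof (rule eq_matI)
    fix i j assume i: "i < dim_row (?A * Mw zs S)" and j: "j < dim_col (?A * Mw zs S)"
    then have im: "i < m" and jm: "j < m" using lz by (auto simp: Mw_def)
    have "(?A * Mw zs S) $$ (i, j) = (\<Sum>k\<in>{0..<m}. a i k * (zs ! k) (sorted_list_of_set S ! j))"
      using im jm lz by (simp add: Mw_def scalar_prod_def)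
    also have "\<dots> = (\<Sum>k<m. fscale (a i k) (zs ! k)) (sorted_list_of_set S ! j)"
      by (simp add: sum_fun_apply lessThan_atLeast0)
    also have "\<dots> = Mw ws S $$ (i, j)"
      using ws[OF im] im jm lw by (simp add: Mw_def)
    finally show "Mw ws S $$ (i, j) = (?A * Mw zs S) $$ (i, j)" by simp
  qed (use lw lz in \<open>auto simp: Mw_def\<close>)
  then have "det (Mw ws S) = det ?A * det (Mw zs S)"
    using det_mult[of ?A m "Mw zs S"] lz by (simp add: Mw_def)
  then show ?thesis using True wedge_det[of S n ws] wedge_det[of S n zs] lw lz by simp
qed

lemma wedge_in_pl: "length vs = k + 1 \<Longrightarrow> wedge n vs \<in> pl_space n k"
  unfolding pl_space_def wedge_def by auto

lemma remove1_nth: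
  assumes "distinct xs" "j < length xs"
  shows "remove1 (xs ! j) xs = take j xs @ drop (Suc j) xs"
proof -
  have "xs = take j xs @ xs ! j # drop (Suc j) xs" using assms(2) by (rule id_take_nth_drop)
  moreover have "xs ! j \<notin> set (take j xs)"
    using assms by (metis distinct_take id_take_nth_drop not_distinct_conv_prefix)
  ultimately show ?thesis by (metis remove1.simps(2) remove1_append)
qed

lemma nth_take_drop:
  assumes "j < length xs" "j' < length xs - 1"
  shows "(take j xs @ drop (Suc j) xs) ! j' = xs ! (if j' < j then j' else Suc j')"
  using assms by (auto simp: nth_append min_def)



lemma wedge_laplace:
  assumes lu: "length us = h" and T: "T \<subseteq> {..n}" "card T = h + 1"
  shows "wedge n (us @ [v]) T = (\<Sum>j<h+1. (-1)^(h+j) * wedge n us (T - {sorted_list_of_set T ! j}) * v (sorted_list_of_set T ! j))"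
proof -
  let ?xs = "sorted_list_of_set T"
  have fT: "finite T" using T by (metis card.infinite nat.simps(3) Suc_eq_plus1)
  have lxs: "length ?xs = h + 1" using T fT by simp
  have dxs: "distinct ?xs" by simp
  have sxs: "set ?xs = T" using fT by simp
  let ?A = "Mw (us @ [v]) T"
  have A: "?A \<in> carrier_mat (h+1) (h+1)" using lu by (simp add: Mw_def)
  have "wedge n (us @ [v]) T = det ?A" using wedge_det[of T n "us @ [v]"] T lu by simp
  also have "\<dots> = (\<Sum>j<h+1. ?A $$ (h,j) * cofactor ?A h j)"
    by (rule laplace_expansion_row[OF A]) simp
  also have "\<dots> = (\<Sum>j<h+1. (-1)^(h+j) * wedge n us (T - {?xs ! j}) * v (?xs ! j))"
  proof (rule sum.cong[OF refl])
    fix j assume "j \<in> {..<h+1}"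
    then have j: "j < h + 1" by simp
    have e1: "?A $$ (h,j) = v (?xs ! j)" using j lu by (simp add: Mw_def nth_append)
    have xj: "?xs ! j \<in> T" using j lxs sxs nth_mem by metis
    have rem: "sorted_list_of_set (T - {?xs ! j}) = take j ?xs @ drop (Suc j) ?xs"
      using sorted_list_of_set_remove[OF fT] remove1_nth[OF dxs] j lxs by simp
    have "mat_delete ?A h j = Mw us (T - {?xs ! j})"
    proof (rule eq_matI)
      fix i' j' assume i': "i' < dim_row (Mw us (T - {?xs ! j}))" and j': "j' < dim_col (Mw us (T - {?xs ! j}))"
      then have i'h: "i' < h" and j'h: "j' < h" using lu by (auto simp: Mw_def)
      have "mat_delete ?A h j $$ (i', j') = ?A $$ (i', if j' < j then j' else Suc j')"
        using i'h j'h lu by (simp add: mat_delete_def Mw_def)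
      also have "\<dots> = (us ! i') (?xs ! (if j' < j then j' else Suc j'))"
        using i'h j'h lu j by (simp add: Mw_def nth_append)
      also have "\<dots> = (us ! i') ((take j ?xs @ drop (Suc j) ?xs) ! j')"
        using nth_take_drop[of j ?xs j'] j lxs j'h by simp
      also have "\<dots> = Mw us (T - {?xs ! j}) $$ (i', j')"
        using i'h j'h lu rem by (simp add: Mw_def)
      finally show "mat_delete ?A h j $$ (i', j') = Mw us (T - {?xs ! j}) $$ (i', j')" .
    qed (use lu in \<open>auto simp: Mw_def mat_delete_def\<close>)
    moreover have "wedge n us (T - {?xs ! j}) = det (Mw us (T - {?xs ! j}))"
      using wedge_det[of "T - {?xs ! j}" n us] T xj lu fT by auto
    ultimately have "cofactor ?A h j = (-1)^(h+j) * wedge n us (T - {?xs ! j})"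
      by (simp add: cofactor_def)
    then show "?A $$ (h,j) * cofactor ?A h j = (-1)^(h+j) * wedge n us (T - {?xs ! j}) * v (?xs ! j)"
      using e1 by simp
  qed
  finally show ?thesis .
qed



lemma fscale_0[simp]: "fscale 0 f = 0"
  by (rule ext) simp

definition phi :: "nat \<Rightarrow> nat \<Rightarrow> (nat set \<Rightarrow> 'a::field) \<Rightarrow> (nat set \<Rightarrow> 'a) \<Rightarrow> 'a" where
  "phi n h c y = (\<Sum>T\<in>Ts n h. c T * y T)"

lemma phi_add: "phi n h c (x + y) = phi n h c x + phi n h c y"
  by (simp add: phi_def sum.distrib algebra_simps)

lemma phi_scale: "phi n h c (fscale a y) = a * phi n h c y"
  by (simp add: phi_def sum_distrib_left algebra_simps)

lemma hyperplane_functional: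
  fixes H :: "(nat set \<Rightarrow> 'a::field) set"
  assumes hyp: "pl_hyperplane n h H" and hn: "h \<le> n"
  obtains c where "\<And>y. y \<in> pl_space n h \<Longrightarrow> y \<in> H \<longleftrightarrow> phi n h c y = 0"
    and "\<exists>T\<in>Ts n h. c T \<noteq> 0"
proof -
  let ?P = "pl_space n h :: (nat set \<Rightarrow> 'a) set"
  let ?N = "n + 1 choose (h + 1)"
  have Hs: "fsp.subspace H" and HP: "H \<subseteq> ?P" and dH: "fsp.dim H = ?N - 1"
    using hyp unfolding pl_hyperplane_def by auto
  have dP: "fsp.dim ?P = ?N" by (rule dim_pl_space)
  have Npos: "?N > 0" using hn by simp
  have fdP: "fd ?P" by (rule fd_pl_space)
  have fdH: "fd H" by (rule fd_subset[OF fdP]) (use HP in \<open>auto intro: fsp.span_base\<close>)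
  have spH: "fsp.span H = H" using Hs by simp
  obtain y0 where y0: "y0 \<in> ?P" "y0 \<notin> H"
  proof -
    have "\<not> ?P \<subseteq> H"
    proof
      assume "?P \<subseteq> H"
      then have "fsp.dim ?P \<le> fsp.dim H" by (intro dim_mono_fd[OF fdH]) (auto intro: fsp.span_base)
      then have "?N \<le> ?N - 1" using dP dH by (simp only:)
      then show False using Npos by linarith
    qed
    then show ?thesis using that by blast
  qed
  have fdI: "fd (insert y0 H)" by (rule fd_subset[OF fdP]) (use HP y0 in \<open>auto intro: fsp.span_base\<close>)
  have dI: "fsp.dim (insert y0 H) = ?N" using dim_insert_fd[OF fdH] y0(2) spH dH Npos by simp
  have Pspan: "?P \<subseteq> fsp.span (insert y0 H)"
  proof
    fix y assume y: "y \<in> ?P"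
    show "y \<in> fsp.span (insert y0 H)"
    proof (rule ccontr)
      assume ny: "y \<notin> fsp.span (insert y0 H)"
      have "fsp.dim (insert y (insert y0 H)) = ?N + 1" using dim_insert_fd[OF fdI ny] dI by simp
      moreover have "fsp.dim (insert y (insert y0 H)) \<le> fsp.dim ?P"
        by (intro dim_mono_fd[OF fdP]) (use HP y0 y in \<open>auto intro: fsp.span_base\<close>)
      ultimately show False using dP by simp
    qed
  qed
  have "\<exists>k. delta T - fscale k y0 \<in> H" if "T \<in> Ts n h" for T
  proof -
    have "delta T \<in> fsp.span (insert y0 H)" using Pspan delta_in_pl[OF that] by auto
    then show ?thesis using spH by (simp add: fsp.span_breakdown_eq)
  qed
  then obtain c where c: "\<And>T. T \<in> Ts n h \<Longrightarrow> delta T - fscale (c T) y0 \<in> H" by metis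
  have key: "y - fscale (phi n h c y) y0 \<in> H" if y: "y \<in> ?P" for y
  proof -
    have "(\<Sum>T\<in>Ts n h. fscale (y T) (delta T - fscale (c T) y0)) \<in> H"
      by (intro fsp.subspace_sum[OF Hs] fsp.subspace_scale[OF Hs] c)
    moreover have "(\<Sum>T\<in>Ts n h. fscale (y T) (delta T - fscale (c T) y0)) = y - fscale (phi n h c y) y0"
    proof (rule ext)
      fix S
      have 1: "(\<Sum>T\<in>Ts n h. fscale (y T) (delta T - fscale (c T) y0)) S
          = (\<Sum>T\<in>Ts n h. y T * delta T S) - (\<Sum>T\<in>Ts n h. c T * y T) * y0 S"
        by (simp add: sum_fun_apply algebra_simps sum_subtractf sum_distrib_right sum_distrib_left)
      have 2: "(\<Sum>T\<in>Ts n h. y T * delta T S) = y S"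
        using fun_cong[OF pl_space_expand[OF y], of S] by (simp add: sum_fun_apply)
      show "(\<Sum>T\<in>Ts n h. fscale (y T) (delta T - fscale (c T) y0)) S = (y - fscale (phi n h c y) y0) S"
        unfolding 1 2 by (simp add: phi_def)
    qed
    ultimately show ?thesis by simp
  qed
  show ?thesis
  proof (rule that)
    fix y assume y: "y \<in> ?P"
    show "y \<in> H \<longleftrightarrow> phi n h c y = 0"
    proof
      assume yH: "y \<in> H"
      show "phi n h c y = 0"
      proof (rule ccontr)
        assume nz: "phi n h c y \<noteq> 0"
        have "y - (y - fscale (phi n h c y) y0) \<in> H"
          using fsp.subspace_diff[OF Hs yH key[OF y]] .
        then have "fscale (inverse (phi n h c y)) (y - (y - fscale (phi n h c y) y0)) \<in> H"
          by (rule fsp.subspace_scale[OF Hs])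
        moreover have "fscale (inverse (phi n h c y)) (y - (y - fscale (phi n h c y) y0)) = y0"
          using nz by (intro ext) simp
        ultimately show False using y0 by simp
      qed
    next
      assume "phi n h c y = 0"
      then show "y \<in> H" using key[OF y] by simp
    qed
  next
    show "\<exists>T\<in>Ts n h. c T \<noteq> 0"
    proof (rule ccontr)
      assume "\<not> ?thesis"
      then have "phi n h c y0 = 0" by (simp add: phi_def)
      then show False using key[OF y0(1)] y0(2) by simp
    qed
  qed
qed



definition extw :: "nat \<Rightarrow> (nat set \<Rightarrow> 'a::field) \<Rightarrow> (nat \<Rightarrow> 'a) \<Rightarrow> nat set \<Rightarrow> 'a" where
  "extw h x v T = (\<Sum>j<h+1. (-1)^(h+j) * x (T - {sorted_list_of_set T ! j}) * v (sorted_list_of_set T ! j))"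

definition Bf :: "nat \<Rightarrow> nat \<Rightarrow> (nat set \<Rightarrow> 'a::field) \<Rightarrow> (nat set \<Rightarrow> 'a) \<Rightarrow> (nat \<Rightarrow> 'a) \<Rightarrow> 'a" where
  "Bf n h c x v = (\<Sum>T\<in>Ts n h. c T * extw h x v T)"

definition ev :: "nat \<Rightarrow> nat \<Rightarrow> 'a::field" where
  "ev j = (\<lambda>i. if i = j then 1 else 0)"

lemma phi_wedge_snoc:
  assumes "length us = h"
  shows "phi n h c (wedge n (us @ [v])) = Bf n h c (wedge n us) v"
  unfolding phi_def Bf_def
proof (rule sum.cong[OF refl])
  fix T assume "T \<in> Ts n h"
  then have "T \<subseteq> {..n}" "card T = h + 1" by (auto simp: Ts_def)
  then show "c T * wedge n (us @ [v]) T = c T * extw h (wedge n us) v T"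
    using wedge_laplace[OF assms] by (simp add: extw_def)
qed

lemma Bf_add_x: "Bf n h c (x + y) v = Bf n h c x v + Bf n h c y v"
  by (simp add: Bf_def extw_def sum.distrib algebra_simps)
lemma Bf_scale_x: "Bf n h c (fscale a x) v = a * Bf n h c x v"
  by (simp add: Bf_def extw_def sum_distrib_left algebra_simps)
lemma Bf_add_v: "Bf n h c x (v + w) = Bf n h c x v + Bf n h c x w"
  by (simp add: Bf_def extw_def sum.distrib algebra_simps)
lemma Bf_scale_v: "Bf n h c x (fscale a v) = a * Bf n h c x v"
  by (simp add: Bf_def extw_def sum_distrib_left algebra_simps)

lemma lin_sum:
  assumes add: "\<And>x y. g (x + y) = g x + g y" and sc: "\<And>c x. g (fscale c x) = c * g x"
    and "finite J"
  shows "g (\<Sum>j\<in>J. fscale (a j) (f j)) = (\<Sum>j\<in>J. a j * (g (f j) :: 'a::field))"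
  using assms(3)
proof (induction J rule: finite_induct)
  case empty then show ?case using lin_zero[of g, OF sc] by (simp only: sum.empty)
next
  case (insert x F) then show ?case by (simp only: sum.insert[OF insert(1,2)] add sc)
qed

lemma ambient_expand:
  assumes "v \<in> ambient n"
  shows "v = (\<Sum>j\<in>{..n}. fscale (v j) (ev j))"
proof (rule ext)
  fix i
  have "(\<Sum>j\<in>{..n}. fscale (v j) (ev j)) i = (\<Sum>j\<in>{..n}. v j * (if i = j then 1 else 0))"
    by (simp add: sum_fun_apply ev_def)
  also have "\<dots> = (if i \<le> n then v i else 0)" by (simp add: if_distrib cong: if_cong)
  also have "\<dots> = v i" using assms by (auto simp: ambient_def)
  finally show "v i = (\<Sum>j\<in>{..n}. fscale (v j) (ev j)) i" by simp
qed

lemma Bf_ambient: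
  assumes "v \<in> ambient n"
  shows "Bf n h c x v = (\<Sum>j\<in>{..n}. v j * Bf n h c x (ev j))"
proof -
  have "Bf n h c x v = Bf n h c x (\<Sum>j\<in>{..n}. fscale (v j) (ev j))"
    using ambient_expand[OF assms] by simp
  also have "\<dots> = (\<Sum>j\<in>{..n}. v j * Bf n h c x (ev j))"
    by (rule lin_sum[OF Bf_add_v Bf_scale_v]) simp
  finally show ?thesis .
qed

lemma ev_ambient: "j \<le> n \<Longrightarrow> ev j \<in> ambient n"
  by (auto simp: ambient_def ev_def)

lemma ambient_subspace: "fsp.subspace (ambient n :: (nat \<Rightarrow> 'a::field) set)"
  unfolding fsp.subspace_def ambient_def by simp

definition bas :: "nat \<Rightarrow> (nat \<Rightarrow> 'a::field) set \<Rightarrow> (nat \<Rightarrow> 'a) list" where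
  "bas k U = (SOME vs. length vs = k + 1 \<and> distinct vs \<and> fsp.independent (set vs) \<and> fsp.span (set vs) = U)"

lemma pluecker_bas: "pluecker n k U = fsp.span {wedge n (bas k U)}"
  unfolding pluecker_def bas_def ..

lemma bas_ex:
  assumes "proj_subspace n d U"
  shows "\<exists>vs. length vs = d + 1 \<and> distinct vs \<and> fsp.independent (set vs) \<and> fsp.span (set vs) = U"
proof -
  have U: "fsp.subspace U" "fsp.dim U = d + 1" using assms by (auto simp: proj_subspace_def)
  obtain B where B: "B \<subseteq> U" "fsp.independent B" "U \<subseteq> fsp.span B" "card B = fsp.dim U"
    using fsp.basis_exists by blast
  have "finite B" using B(4) U(2) by (metis card.infinite nat.simps(3) Suc_eq_plus1)
  then obtain vs where vs: "set vs = B" "distinct vs" using finite_distinct_list by blast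
  have "length vs = d + 1" using vs B(4) U(2) distinct_card by metis
  moreover have "fsp.span (set vs) = U"
    using vs B U(1) fsp.span_minimal[of B U] by auto
  ultimately show ?thesis using vs B by blast
qed

lemma bas:
  assumes "proj_subspace n d U"
  shows "length (bas d U) = d + 1" "distinct (bas d U)" "fsp.independent (set (bas d U))"
    "fsp.span (set (bas d U)) = U"
  using someI_ex[OF bas_ex[OF assms]] unfolding bas_def by auto

lemma pluecker_sub:
  assumes "fsp.subspace X"
  shows "pluecker n k U \<subseteq> X \<longleftrightarrow> wedge n (bas k U) \<in> X"
  unfolding pluecker_bas
  using fsp.span_minimal[of "{wedge n (bas k U)}" X, OF _ assms] fsp.span_base[of "wedge n (bas k U)" "{wedge n (bas k U)}"]
  by auto

lemma wedge_change:
  assumes lw: "length ws = m" and lz: "length zs = m" and dz: "distinct zs"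
    and sp: "set ws \<subseteq> fsp.span (set zs)"
  shows "\<exists>d. wedge n ws = fscale d (wedge n zs)"
proof -
  have setz: "set zs = (!) zs ` {..<m}" using lz by (auto simp: set_conv_nth)
  have inj: "inj_on ((!) zs) {..<m}" using dz lz by (intro inj_on_nth) auto
  have "\<forall>i<m. \<exists>u. ws ! i = (\<Sum>k<m. fscale (u (zs ! k)) (zs ! k))"
  proof (intro allI impI)
    fix i assume "i < m"
    then have "ws ! i \<in> fsp.span (set zs)" using sp lw nth_mem by blast
    then obtain u where "ws ! i = (\<Sum>v\<in>set zs. fscale (u v) v)"
      using fsp.span_finite[of "set zs"] by auto
    also have "\<dots> = (\<Sum>k<m. fscale (u (zs ! k)) (zs ! k))"
      unfolding setz by (rule sum.reindex[OF inj, unfolded comp_def])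
    finally show "\<exists>u. ws ! i = (\<Sum>k<m. fscale (u (zs ! k)) (zs ! k))" by blast
  qed
  then obtain u where u: "\<And>i. i < m \<Longrightarrow> ws ! i = (\<Sum>k<m. fscale (u i (zs ! k)) (zs ! k))"
    by metis
  have "wedge n ws = fscale (det (mat m m (\<lambda>(i,k). u i (zs ! k)))) (wedge n zs)"
    by (rule ext) (simp add: wedge_lincomb[OF lw lz u])
  then show ?thesis by blast
qed

lemma wedge_zero_last: "wedge n (us @ [0]) = 0"
proof (rule ext)
  fix S
  have "(\<Prod>i<length (us @ [0]). ((us @ [0]) ! i) (sorted_list_of_set S ! p i)) = 0" for p
    by (rule prod_zero) (auto intro!: bexI[of _ "length us"] simp: nth_append)
  then show "wedge n (us @ [0]) S = 0 S" by (simp add: wedge_def)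
qed



lemma phi_zero: "phi n h c 0 = 0"
  by (rule lin_zero[of "phi n h c", OF phi_scale])

lemma Bf_zero_x: "Bf n h c 0 v = 0"
  by (rule lin_zero[of "\<lambda>x. Bf n h c x v", OF Bf_scale_x])

lemma W_subspace: "fsp.subspace {x \<in> pl_space n k. \<forall>j\<le>n. Bf n h c x (ev j) = (0::'a::field)}"
  using pl_space_subspace[of n k, where 'a='a]
  unfolding fsp.subspace_def by (simp add: Bf_add_x Bf_scale_x Bf_zero_x)

lemma main_equiv:
  fixes K :: "(nat \<Rightarrow> 'a::field) set set" and H :: "(nat set \<Rightarrow> 'a) set"
  assumes hH: "\<And>y. y \<in> pl_space n h \<Longrightarrow> y \<in> H \<longleftrightarrow> phi n h c y = 0"
    and h1: "1 \<le> h" and hn: "h \<le> n"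
    and K: "K = {U. proj_subspace n h U \<and> pluecker n h U \<subseteq> H}"
    and Hs: "fsp.subspace H"
    and U: "proj_subspace n (h - 1) U"
  shows "singular n h K U \<longleftrightarrow>
    pluecker n (h - 1) U \<subseteq> {x \<in> pl_space n (h-1). \<forall>j\<le>n. Bf n h c x (ev j) = 0}"
proof -
  let ?W = "{x \<in> pl_space n (h-1). \<forall>j\<le>n. Bf n h c x (ev j) = 0}"
  define us where "us = bas (h - 1) U"
  have hh: "h - 1 + 1 = h" using h1 by simp
  have lus: "length us = h" using bas(1)[OF U] hh unfolding us_def by simp
  have dus: "distinct us" using bas(2)[OF U] unfolding us_def by simp
  have ius: "fsp.independent (set us)" using bas(3)[OF U] unfolding us_def by simp
  have sus: "fsp.span (set us) = U" using bas(4)[OF U] unfolding us_def by simp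
  have Usub: "fsp.subspace U" and Uamb: "U \<subseteq> ambient n" and dU: "fsp.dim U = h"
    using U hh by (auto simp: proj_subspace_def)
  have usU: "set us \<subseteq> U" using sus fsp.span_base by blast
  let ?X = "wedge n us"
  have XP: "?X \<in> pl_space n (h - 1)" using wedge_in_pl[of us "h - 1" n] lus hh by simp
  have "pluecker n (h - 1) U \<subseteq> ?W \<longleftrightarrow> ?X \<in> ?W"
    using pluecker_sub[OF W_subspace[of n "h - 1" h c], of n "h - 1" U] unfolding us_def by simp
  also have "\<dots> \<longleftrightarrow> (\<forall>j\<le>n. Bf n h c ?X (ev j) = 0)" using XP by simp
  finally have eqW: "pluecker n (h - 1) U \<subseteq> ?W \<longleftrightarrow> (\<forall>j\<le>n. Bf n h c ?X (ev j) = 0)" .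
  have inK: "V \<in> K \<longleftrightarrow> proj_subspace n h V \<and> wedge n (bas h V) \<in> H" for V
    using K pluecker_sub[OF Hs] by auto
  have phiH: "phi n h c (wedge n (bas h V)) = 0" if "V \<in> K" for V
  proof -
    have "proj_subspace n h V" "wedge n (bas h V) \<in> H" using that inK by auto
    moreover have "wedge n (bas h V) \<in> pl_space n h" using bas(1)[OF \<open>proj_subspace n h V\<close>] by (rule wedge_in_pl)
    ultimately show ?thesis using hH by simp
  qed
  show ?thesis
  proof
    assume sing: "singular n h K U"
    have "Bf n h c ?X v = 0" if v: "v \<in> ambient n" for v
    proof -
      have "phi n h c (wedge n (us @ [v])) = 0"
      proof (cases "v \<in> U")
        case True
        have d0: "distinct (us @ [0])" using dus ius fsp.dependent_zero by auto
        have "set (us @ [v]) \<subseteq> fsp.span (set (us @ [0]))"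
        proof -
          have "set (us @ [v]) \<subseteq> fsp.span (set us)" using usU True sus fsp.span_base by auto
          also have "\<dots> \<subseteq> fsp.span (set (us @ [0]))" by (rule fsp.span_mono) auto
          finally show ?thesis .
        qed
        then obtain d where "wedge n (us @ [v]) = fscale d (wedge n (us @ [0]))"
          using wedge_change[of "us @ [v]" "h + 1" "us @ [0]"] lus d0 by auto
        then show ?thesis using phi_zero phi_scale by (simp add: wedge_zero_last)
      next
        case False
        let ?V = "fsp.span (insert v (set us))"
        have vnot: "v \<notin> fsp.span (set us)" using False sus by simp
        have indV: "fsp.independent (insert v (set us))" using fsp.independent_insertI[OF vnot ius] .
        have vnus: "v \<notin> set us" using False usU by auto
        have "fsp.dim ?V = h + 1"
          using fsp.dim_span_eq_card_independent[OF indV] vnus lus distinct_card[OF dus] by simp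
        moreover have "?V \<subseteq> ambient n"
          using v usU Uamb by (intro fsp.span_minimal ambient_subspace) auto
        ultimately have pV: "proj_subspace n h ?V" by (simp add: proj_subspace_def)
        have "U \<subseteq> ?V" using sus fsp.span_mono[of "set us" "insert v (set us)"] by auto
        then have "?V \<in> K" using sing pV unfolding singular_def by blast
        then have ph0: "phi n h c (wedge n (bas h ?V)) = 0" by (rule phiH)
        have "set (us @ [v]) \<subseteq> fsp.span (set (bas h ?V))"
          using bas(4)[OF pV] fsp.span_base[of _ "insert v (set us)"] by auto
        then obtain d where "wedge n (us @ [v]) = fscale d (wedge n (bas h ?V))"
          using wedge_change[of "us @ [v]" "h + 1" "bas h ?V"] lus bas(1,2)[OF pV] by auto
        then show ?thesis using ph0 by (metis phi_scale mult_zero_right)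
      qed
      then show ?thesis using phi_wedge_snoc[OF lus] by simp
    qed
    then show "pluecker n (h - 1) U \<subseteq> ?W" using eqW ev_ambient by blast
  next
    assume "pluecker n (h - 1) U \<subseteq> ?W"
    then have X0: "\<And>j. j \<le> n \<Longrightarrow> Bf n h c ?X (ev j) = 0" using eqW by blast
    show "singular n h K U"
      unfolding singular_def
    proof (intro conjI allI impI)
      show "proj_subspace n (h - 1) U" by (rule U)
      fix V assume "proj_subspace n h V \<and> U \<subseteq> V"
      then have pV: "proj_subspace n h V" and UV: "U \<subseteq> V" by auto
      let ?ws = "bas h V"
      have Vsub: "fsp.subspace V" and Vamb: "V \<subseteq> ambient n" and dV: "fsp.dim V = h + 1"
        using pV by (auto simp: proj_subspace_def)
      have fdV: "fd V" unfolding fd_def using bas(4)[OF pV] by (intro exI[of _ "set ?ws"]) auto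
      have fdU: "fd U" unfolding fd_def using sus by (intro exI[of _ "set us"]) auto
      obtain v where v: "v \<in> V" "v \<notin> U"
      proof -
        have "\<not> V \<subseteq> U"
        proof
          assume "V \<subseteq> U"
          then have "fsp.dim V \<le> fsp.dim U" using dim_mono_fd[OF fdU] fsp.span_base by blast
          then show False using dV dU by simp
        qed
        then show ?thesis using that by blast
      qed
      let ?zs = "us @ [v]"
      have vnot: "v \<notin> fsp.span (set us)" using v sus by simp
      have vnus: "v \<notin> set us" using v usU by auto
      have indz: "fsp.independent (set ?zs)" using fsp.independent_insertI[OF vnot ius] by simp
      have dz: "distinct ?zs" using dus vnus by simp
      have "V \<subseteq> fsp.span (set ?zs)"
      proof
        fix y assume y: "y \<in> V"
        show "y \<in> fsp.span (set ?zs)"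
        proof (rule ccontr)
          assume ny: "y \<notin> fsp.span (set ?zs)"
          have ind2: "fsp.independent (insert y (set ?zs))" by (rule fsp.independent_insertI[OF ny indz])
          have "y \<notin> set ?zs" using ny fsp.span_base by blast
          then have "fsp.dim (insert y (set ?zs)) = h + 2"
            using fsp.dim_eq_card_independent[OF ind2] dz lus distinct_card[OF dz] by simp
          moreover have "fsp.dim (insert y (set ?zs)) \<le> fsp.dim V"
          proof (rule dim_mono_fd[OF fdV])
            have "insert y (set ?zs) \<subseteq> V" using y v(1) usU UV by auto
            then show "insert y (set ?zs) \<subseteq> fsp.span V" using fsp.span_base by blast
          qed
          ultimately show False using dV by simp
        qed
      qed
      then have "set ?ws \<subseteq> fsp.span (set ?zs)" using bas(4)[OF pV] fsp.span_base by blast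
      then obtain d where d: "wedge n ?ws = fscale d (wedge n ?zs)"
        using wedge_change[of ?ws "h + 1" ?zs] bas(1)[OF pV] lus dz by auto
      have "phi n h c (wedge n ?zs) = Bf n h c ?X v" by (rule phi_wedge_snoc[OF lus])
      also have "\<dots> = (\<Sum>j\<in>{..n}. v j * Bf n h c ?X (ev j))" using Bf_ambient v(1) Vamb by blast
      also have "\<dots> = 0" using X0 by simp
      finally have "phi n h c (wedge n ?ws) = 0" using d by (metis phi_scale mult_zero_right)
      moreover have "wedge n ?ws \<in> pl_space n h" using bas(1)[OF pV] by (rule wedge_in_pl)
      ultimately have "wedge n ?ws \<in> H" using hH by simp
      then show "V \<in> K" using inK pV by simp
    qed
  qed
qed



declare fscale_apply[simp del]

lemma dim_lower:
  fixes l :: "nat \<Rightarrow> (nat set \<Rightarrow> 'a::field) \<Rightarrow> 'a"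
  assumes add: "\<And>j x y. l j (x + y) = l j x + l j y" and sc: "\<And>j c x. l j (fscale c x) = c * l j x"
  shows "fsp.subspace {x\<in>pl_space n k. \<forall>j<m. l j x = 0} \<and>
         fsp.dim (pl_space n k :: (nat set \<Rightarrow> 'a) set) \<le> fsp.dim {x\<in>pl_space n k. \<forall>j<m. l j x = 0} + m"
proof (induction m)
  case 0
  have e: "{x\<in>pl_space n k. \<forall>j<(0::nat). l j x = 0} = pl_space n k" by simp
  show ?case unfolding e by (simp add: pl_space_subspace del: fscale_apply)
next
  case (Suc m)
  let ?S = "{x\<in>pl_space n k. \<forall>j<m. l j x = 0}"
  have eq: "{x\<in>pl_space n k. \<forall>j<Suc m. l j x = 0} = {x\<in>?S. l m x = 0}"
    by (auto simp: less_Suc_eq)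
  have fdS: "fd ?S" by (rule fd_subset[OF fd_pl_space]) (auto intro: fsp.span_base)
  have S: "fsp.subspace ?S" using Suc.IH by simp
  have "fsp.subspace {x\<in>?S. l m x = 0}" "fsp.dim ?S \<le> fsp.dim {x\<in>?S. l m x = 0} + 1"
    using section_dim[OF S fdS, of "l m"] add sc by auto
  then show ?case unfolding eq using Suc.IH by simp
qed

lemma dim_upper:
  fixes l :: "nat \<Rightarrow> (nat set \<Rightarrow> 'a::field) \<Rightarrow> 'a"
  assumes add: "\<And>j x y. l j (x + y) = l j x + l j y" and sc: "\<And>j c x. l j (fscale c x) = c * l j x"
    and wit: "\<And>i. i < M \<Longrightarrow> \<exists>s\<in>pl_space n k. (\<forall>j<i. l j s = 0) \<and> l i s \<noteq> 0"
  shows "m \<le> M \<Longrightarrow> fsp.subspace {x\<in>pl_space n k. \<forall>j<m. l j x = 0} \<and>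
         fsp.dim {x\<in>pl_space n k. \<forall>j<m. l j x = 0} + m \<le> fsp.dim (pl_space n k :: (nat set \<Rightarrow> 'a) set)"
proof (induction m)
  case 0
  have e: "{x\<in>pl_space n k. \<forall>j<(0::nat). l j x = 0} = pl_space n k" by simp
  show ?case unfolding e by (simp add: pl_space_subspace del: fscale_apply)
next
  case (Suc m)
  let ?S = "{x\<in>pl_space n k. \<forall>j<m. l j x = 0}"
  have eq: "{x\<in>pl_space n k. \<forall>j<Suc m. l j x = 0} = {x\<in>?S. l m x = 0}"
    by (auto simp: less_Suc_eq)
  have fdS: "fd ?S" by (rule fd_subset[OF fd_pl_space]) (auto intro: fsp.span_base)
  have IH: "fsp.subspace ?S" "fsp.dim ?S + m \<le> fsp.dim (pl_space n k :: (nat set \<Rightarrow> 'a) set)"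
    using Suc by auto
  have "m < M" using Suc.prems by simp
  then obtain s where s: "s \<in> pl_space n k" "\<forall>j<m. l j s = 0" "l m s \<noteq> 0" using wit by blast
  have "fsp.subspace {x\<in>?S. l m x = 0}" "fsp.dim {x\<in>?S. l m x = 0} + 1 \<le> fsp.dim ?S"
    using section_dim(1)[OF IH(1) fdS, of "l m"] section_dim(3)[OF IH(1) fdS, of "l m" s] add sc s by auto
  then show ?case unfolding eq using IH by simp
qed

lemma inner_zero:
  assumes T: "T \<in> Ts n h" and nt: "\<not> (t \<in> T \<and> T - {t} = R)"
  shows "extw h (delta R :: nat set \<Rightarrow> 'a::field) (ev t) T = 0"
  unfolding extw_def
proof (rule sum.neutral, rule ballI)
  fix k assume "k \<in> {..<h+1}"
  then have k: "k < h + 1" by simp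
  have fT: "finite T" and cT: "card T = h + 1" using T by (auto simp: Ts_def intro: finite_subset)
  have mem: "sorted_list_of_set T ! k \<in> T"
    using k fT cT nth_mem[of k "sorted_list_of_set T"] by simp
  show "(-1) ^ (h + k) * delta R (T - {sorted_list_of_set T ! k}) * ev t (sorted_list_of_set T ! k) = (0::'a)"
  proof (cases "sorted_list_of_set T ! k = t")
    case True
    then have "T - {sorted_list_of_set T ! k} \<noteq> R" using nt mem by auto
    then show ?thesis by (simp add: delta_def)
  next
    case False
    then show ?thesis by (simp add: ev_def)
  qed
qed

lemma inner_one:
  assumes T: "T \<in> Ts n h" and i: "i < h + 1"
  shows "extw h (delta (T - {sorted_list_of_set T ! i}) :: nat set \<Rightarrow> 'a::field) (ev (sorted_list_of_set T ! i)) T = (-1)^(h+i)"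
proof -
  let ?xs = "sorted_list_of_set T"
  have fT: "finite T" and cT: "card T = h + 1" using T by (auto simp: Ts_def intro: finite_subset)
  have lxs: "length ?xs = h + 1" using fT cT by simp
  have "extw h (delta (T - {?xs ! i}) :: nat set \<Rightarrow> 'a) (ev (?xs ! i)) T
      = (\<Sum>k<h+1. if k = i then (-1)^(h+i) else 0)"
    unfolding extw_def
  proof (rule sum.cong[OF refl])
    fix k assume "k \<in> {..<h+1}"
    then have k: "k < h + 1" by simp
    have "?xs ! k = ?xs ! i \<longleftrightarrow> k = i"
      using nth_eq_iff_index_eq[of ?xs k i] k i lxs by simp
    then show "(-1) ^ (h + k) * delta (T - {?xs ! i}) (T - {?xs ! k}) * ev (?xs ! i) (?xs ! k)
        = (if k = i then (-1)^(h+i) else (0::'a))"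
      by (auto simp: ev_def delta_def)
  qed
  also have "\<dots> = (-1)^(h+i)" using i by simp
  finally show ?thesis .
qed

lemma Bf_delta:
  assumes T0: "T0 \<in> Ts n h" and i: "i < h + 1" and i': "i' < h + 1"
  shows "Bf n h c (delta (T0 - {sorted_list_of_set T0 ! i})) (ev (sorted_list_of_set T0 ! i'))
       = (if i' = i then c T0 * (-1)^(h+i) else (0::'a::field))"
proof -
  let ?xs = "sorted_list_of_set T0"
  let ?R = "T0 - {?xs ! i}"
  let ?t = "?xs ! i'"
  have fT: "finite T0" and cT: "card T0 = h + 1" using T0 by (auto simp: Ts_def intro: finite_subset)
  have lxs: "length ?xs = h + 1" using fT cT by simp
  have tmem: "?t \<in> T0" using i' lxs fT nth_mem[of i' ?xs] by simp
  have timem: "?xs ! i \<in> T0" using i lxs fT nth_mem[of i ?xs] by simp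
  show ?thesis
  proof (cases "i' = i")
    case True
    have "Bf n h c (delta ?R) (ev ?t) = c T0 * extw h (delta ?R) (ev ?t) T0
        + (\<Sum>T\<in>Ts n h - {T0}. c T * extw h (delta ?R) (ev ?t) T)"
      unfolding Bf_def using T0 by (subst sum.remove[of _ T0]) auto
    also have "(\<Sum>T\<in>Ts n h - {T0}. c T * extw h (delta ?R :: nat set \<Rightarrow> 'a) (ev ?t) T) = 0"
    proof (rule sum.neutral, rule ballI)
      fix T assume T: "T \<in> Ts n h - {T0}"
      have "\<not> (?t \<in> T \<and> T - {?t} = ?R)"
      proof
        assume a: "?t \<in> T \<and> T - {?t} = ?R"
        then have "T = insert ?t ?R" by blast
        also have "\<dots> = T0" using True tmem by blast
        finally show False using T by simp
      qed
      then show "c T * extw h (delta ?R :: nat set \<Rightarrow> 'a) (ev ?t) T = 0"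
        using inner_zero[of T n h ?t ?R, where 'a='a] T by simp
    qed
    also have "extw h (delta ?R :: nat set \<Rightarrow> 'a) (ev ?t) T0 = (-1)^(h+i)"
      using inner_one[OF T0 i] True by simp
    finally show ?thesis using True by simp
  next
    case False
    have ne: "?t \<noteq> ?xs ! i" using nth_eq_iff_index_eq[of ?xs i' i] False i i' lxs by simp
    have "Bf n h c (delta ?R) (ev ?t) = (0::'a)"
      unfolding Bf_def
    proof (rule sum.neutral, rule ballI)
      fix T assume T: "T \<in> Ts n h"
      have "\<not> (?t \<in> T \<and> T - {?t} = ?R)" using tmem ne by blast
      then show "c T * extw h (delta ?R :: nat set \<Rightarrow> 'a) (ev ?t) T = 0"
        using inner_zero[of T n h ?t ?R, where 'a='a] T by simp
    qed
    then show ?thesis using False by simp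
  qed
qed



theorem corollary5p4:
  fixes n h :: nat and K :: "(nat \<Rightarrow> 'a::field) set set"
  assumes "1 \<le> h" and "h \<le> n - 1"
    and "linear_complex n h K"
  shows "\<exists>W :: (nat set \<Rightarrow> 'a) set.
           fsp.subspace W \<and> W \<subseteq> pl_space n (h - 1) \<and>
           int (n + 1 choose h) - int (n + 2) \<le> int (fsp.dim W) - 1 \<and>
           int (fsp.dim W) - 1 \<le> int (n + 1 choose h) - int (h + 2) \<and>
           {U. singular n h K U} = {U. proj_subspace n (h - 1) U \<and> pluecker n (h - 1) U \<subseteq> W}"
proof -
  have h1: "1 \<le> h" and hn: "h \<le> n" using assms(1,2) by auto
  obtain H :: "(nat set \<Rightarrow> 'a) set" where hyp: "pl_hyperplane n h H"
    and K: "K = {U. proj_subspace n h U \<and> pluecker n h U \<subseteq> H}"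
    using assms(3) unfolding linear_complex_def by blast
  have Hs: "fsp.subspace H" using hyp unfolding pl_hyperplane_def by simp
  obtain c where hH: "\<And>y. y \<in> pl_space n h \<Longrightarrow> y \<in> H \<longleftrightarrow> phi n h c y = 0"
    and cnz: "\<exists>T\<in>Ts n h. c T \<noteq> 0"
    using hyperplane_functional[OF hyp hn] by blast
  define W where "W = {x \<in> pl_space n (h-1). \<forall>j\<le>n. Bf n h c x (ev j) = (0::'a)}"
  let ?P = "pl_space n (h - 1) :: (nat set \<Rightarrow> 'a) set"
  have hh: "h - 1 + 1 = h" using h1 by simp
  have dP: "fsp.dim ?P = (n + 1 choose h)" using dim_pl_space[of n "h - 1", where 'a='a] hh by simp
  have Wsub: "fsp.subspace W" unfolding W_def by (rule W_subspace)
  have WP: "W \<subseteq> ?P" unfolding W_def by auto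
  have fdW: "fd W" by (rule fd_subset[OF fd_pl_space]) (use WP in \<open>auto intro: fsp.span_base\<close>)
  have eqW: "W = {x \<in> ?P. \<forall>j<n+1. Bf n h c x (ev j) = 0}"
    unfolding W_def by (auto simp: less_Suc_eq_le)
  have low: "fsp.dim ?P \<le> fsp.dim W + (n + 1)"
    using dim_lower[of "\<lambda>j x. Bf n h c x (ev j)" n "h - 1" "n + 1"] Bf_add_x Bf_scale_x
    unfolding eqW by blast
  obtain T0 where T0: "T0 \<in> Ts n h" "c T0 \<noteq> 0" using cnz by blast
  let ?t = "\<lambda>i. sorted_list_of_set T0 ! i"
  have fT0: "finite T0" and cT0: "card T0 = h + 1" and sT0: "T0 \<subseteq> {..n}"
    using T0 by (auto simp: Ts_def intro: finite_subset)
  have lxs: "length (sorted_list_of_set T0) = h + 1" using fT0 cT0 by simp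
  have tmem: "?t i \<in> T0" if "i < h + 1" for i using that lxs fT0 nth_mem[of i "sorted_list_of_set T0"] by simp
  let ?U = "{x \<in> ?P. \<forall>j<h+1. Bf n h c x (ev (?t j)) = 0}"
  have wit: "\<exists>s\<in>?P. (\<forall>j<i. Bf n h c s (ev (?t j)) = 0) \<and> Bf n h c s (ev (?t i)) \<noteq> 0"
    if i: "i < h + 1" for i
  proof (intro bexI conjI allI impI)
    let ?s = "delta (T0 - {?t i}) :: nat set \<Rightarrow> 'a"
    show "?s \<in> ?P"
    proof (rule delta_in_pl)
      have "card (T0 - {?t i}) = h" using cT0 tmem[OF i] fT0 by simp
      then show "T0 - {?t i} \<in> Ts n (h - 1)" using sT0 hh by (auto simp: Ts_def)
    qed
    fix j assume "j < i"
    then show "Bf n h c ?s (ev (?t j)) = 0" using Bf_delta[OF T0(1) i, of j c] i by simp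
  next
    let ?s = "delta (T0 - {?t i}) :: nat set \<Rightarrow> 'a"
    show "Bf n h c ?s (ev (?t i)) \<noteq> 0" using Bf_delta[OF T0(1) i i, of c] T0(2) by simp
  qed
  have up: "fsp.dim ?U + (h + 1) \<le> fsp.dim ?P"
    using dim_upper[of "\<lambda>j x. Bf n h c x (ev (?t j))" "h + 1" n "h - 1" "h + 1"] Bf_add_x Bf_scale_x wit
    by blast
  have "W \<subseteq> ?U"
  proof
    fix x assume "x \<in> W"
    moreover have "?t j \<le> n" if "j < h + 1" for j using tmem[OF that] sT0 by auto
    ultimately show "x \<in> ?U" unfolding W_def by auto
  qed
  then have "fsp.dim W \<le> fsp.dim ?U"
    by (intro dim_mono_fd) (auto intro: fd_subset[OF fd_pl_space] fsp.span_base)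
  with up have upW: "fsp.dim W + (h + 1) \<le> fsp.dim ?P" by simp
  have seteq: "{U. singular n h K U} = {U. proj_subspace n (h - 1) U \<and> pluecker n (h - 1) U \<subseteq> W}"
  proof (intro Collect_cong iffI conjI)
    fix U assume s: "singular n h K U"
    then show pU: "proj_subspace n (h - 1) U" by (simp add: singular_def)
    show "pluecker n (h - 1) U \<subseteq> W"
      using main_equiv[OF hH h1 hn K Hs pU] s unfolding W_def by simp
  next
    fix U assume "proj_subspace n (h - 1) U \<and> pluecker n (h - 1) U \<subseteq> W"
    then show "singular n h K U"
      using main_equiv[OF hH h1 hn K Hs] unfolding W_def by blast
  qed
  show ?thesis
  proof (intro exI conjI)
    show "fsp.subspace W" by (rule Wsub)
    show "W \<subseteq> ?P" by (rule WP)
    show "int (n + 1 choose h) - int (n + 2) \<le> int (fsp.dim W) - 1" using low dP by linarith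
    show "int (fsp.dim W) - 1 \<le> int (n + 1 choose h) - int (h + 2)" using upW dP by linarith
    show "{U. singular n h K U} = {U. proj_subspace n (h - 1) U \<and> pluecker n (h - 1) U \<subseteq> W}"
      by (rule seteq)
  qed
qed


end
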